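(* Let $\Omega\subset\mathbb C^n$ be an open set and let $f:\Omega\to\mathbb C$ be a holomorphic function which is totally unbounded in $\Omega$. Then for all open sets $U,V\subset\mathbb C^n$ with $U$ connected and $\emptyset\ne V\subseteq U\cap\Omega\ne U$, there is no holomorphic function $F$ on $U$ with $F|_V=f|_V$.
   Context: A holomorphic $f:\Omega\to\mathbb C$ is called totally unbounded in $\Omega$ if for every $w\in\partial\Omega$, every $\delta>0$ and every connected component $E$ of $B(w,\delta)\cap\Omega=\{z\in\Omega:|z-w|<\delta\}$, one has $\sup_{z\in E}|f(z)|=\infty$. *)

theory Defs
  imports "HOL-Analysis.Analysis"
begin

definition complex_linear :: "(complex ^ 'n \<Rightarrow> complex) \<Rightarrow> bool" where
  "complex_linear L \<longleftrightarrow> linear L \<and> (\<forall>c x. L (c *s x) = c * L x)"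

definition holomorphic_n :: "(complex ^ 'n \<Rightarrow> complex) \<Rightarrow> (complex ^ 'n) set \<Rightarrow> bool" where
  "holomorphic_n f S \<longleftrightarrow>
     (\<forall>z\<in>S. \<exists>L. complex_linear L \<and> (f has_derivative L) (at z))"

definition totally_unbounded :: "(complex ^ 'n \<Rightarrow> complex) \<Rightarrow> (complex ^ 'n) set \<Rightarrow> bool" where
  "totally_unbounded f \<Omega> \<longleftrightarrow>
     (\<forall>w\<in>frontier \<Omega>. \<forall>\<delta>>0. \<forall>E\<in>components (ball w \<delta> \<inter> \<Omega>). \<not> bounded (f ` E))"

end

theory Submission imports Defs "HOL-Complex_Analysis.Complex_Analysis" begin
lemma bl: "bounded_linear (\<lambda>s::complex. s *s (d::complex^'n))"
proof -
  have "linear (\<lambda>s::complex. s *s (d::complex^'n))"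
    by (rule linearI) (auto simp: vec_eq_iff algebra_simps)
  thus ?thesis using linear_conv_bounded_linear by blast
qed

lemma line_deriv:
  "((\<lambda>s::complex. a + s *s (d::complex^'n)) has_derivative (\<lambda>s. s *s d)) (at t)"
  using has_derivative_add[OF has_derivative_const bounded_linear_imp_has_derivative[OF bl]] by simp

lemma ball_lemma:
  fixes g :: "complex^'n \<Rightarrow> complex"
  assumes hol: "holomorphic_n g (ball c r)" and a: "a \<in> ball c r" and e: "e > 0"
    and z: "\<forall>y\<in>ball a e. g y = 0" and y: "y \<in> ball c r"
  shows "g y = 0"
proof -
  define d where "d = y - a"
  define \<phi> where "\<phi> = (\<lambda>s::complex. a + s *s d)"
  define T where "T = \<phi> -` ball c r"
  define h where "h = g \<circ> \<phi>"
  have cont: "continuous (at x) \<phi>" for x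
    unfolding \<phi>_def using line_deriv has_derivative_continuous by blast
  have oT: "open T" unfolding T_def by (rule continuous_open_vimage[OF open_ball cont])
  have cT: "convex T"
    unfolding T_def
  proof (rule convexI)
    fix x1 x2 :: complex and u v :: real
    assume x1: "x1 \<in> \<phi> -` ball c r" and x2: "x2 \<in> \<phi> -` ball c r" and "0 \<le> u" "0 \<le> v" "u + v = 1"
    then have uv: "0 \<le> u \<and> 0 \<le> v \<and> u + v = 1" by simp
    have "\<phi> (u *\<^sub>R x1 + v *\<^sub>R x2) = u *\<^sub>R \<phi> x1 + v *\<^sub>R \<phi> x2"
    proof -
      have "a = u *\<^sub>R a + v *\<^sub>R a" using uv by (metis scaleR_add_left scaleR_one)
      then show ?thesis unfolding \<phi>_def
        by (auto simp: vec_eq_iff algebra_simps)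
    qed
    moreover have "u *\<^sub>R \<phi> x1 + v *\<^sub>R \<phi> x2 \<in> ball c r"
      using convex_ball[of c r] x1 x2 uv unfolding convex_def by auto
    ultimately show "u *\<^sub>R x1 + v *\<^sub>R x2 \<in> \<phi> -` ball c r" by simp
  qed
  have holh: "h holomorphic_on T"
    unfolding holomorphic_on_def
  proof
    fix t assume t: "t \<in> T"
    then have "\<phi> t \<in> ball c r" unfolding T_def by simp
    then obtain L where L: "complex_linear L" "(g has_derivative L) (at (\<phi> t))"
      using hol unfolding holomorphic_n_def by blast
    have "(h has_derivative (L \<circ> (\<lambda>s. s *s d))) (at t)"
      unfolding h_def \<phi>_def using diff_chain_at[OF line_deriv L(2)[unfolded \<phi>_def]] .
    moreover have "L \<circ> (\<lambda>s. s *s d) = (*) (L d)"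
      using L(1) unfolding complex_linear_def by (auto simp: fun_eq_iff)
    ultimately have "(h has_field_derivative L d) (at t)"
      by (simp add: has_field_derivative_def)
    then show "h field_differentiable at t within T"
      using field_differentiable_at_within field_differentiable_def by blast
  qed
  define T0 where "T0 = T \<inter> \<phi> -` ball a e"
  have "open T0" unfolding T0_def using oT continuous_open_vimage[OF open_ball cont] by blast
  moreover have "0 \<in> T0" unfolding T0_def T_def \<phi>_def using a e by simp
  ultimately have lim: "0 islimpt T0" by (simp add: interior_limit_point interior_open)
  have "h 1 = 0"
  proof (rule analytic_continuation[OF holh oT convex_connected[OF cT], of T0 0])
    show "T0 \<subseteq> T" unfolding T0_def by auto
    show "0 \<in> T" unfolding T_def \<phi>_def using a by simp
    show "0 islimpt T0" by (rule lim)
    show "\<And>z. z \<in> T0 \<Longrightarrow> h z = 0" unfolding T0_def h_def using z by auto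
    show "1 \<in> T" unfolding T_def \<phi>_def d_def using y by simp
  qed
  then show ?thesis unfolding h_def \<phi>_def d_def by simp
qed

lemma holomorphic_n_mono: "holomorphic_n g S \<Longrightarrow> T \<subseteq> S \<Longrightarrow> holomorphic_n g T"
  unfolding holomorphic_n_def by blast

lemma ident:
  fixes g :: "complex^'n \<Rightarrow> complex"
  assumes hol: "holomorphic_n g W" and oW: "open W" and cW: "connected W"
    and a: "a \<in> W" and e: "e > 0" and z: "\<forall>y\<in>ball a e. g y = 0" and b: "b \<in> W"
  shows "g b = 0"
proof -
  let ?Q = "\<lambda>x. \<exists>e>0. \<forall>y\<in>ball x e. g y = 0"
  have "?Q b"
  proof (rule connected_induction_simple[OF cW a b])
    show "?Q a" using e z by blast
    fix x assume x: "x \<in> W"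
    then obtain r where r: "r > 0" "ball x r \<subseteq> W" using oW open_contains_ball by blast
    have "openin (top_of_set W) (ball x r)" using r by (simp add: open_subset)
    moreover have "\<forall>p\<in>ball x r. \<forall>q\<in>ball x r. ?Q p \<longrightarrow> ?Q q"
    proof (intro ballI impI)
      fix p q assume p: "p \<in> ball x r" and q: "q \<in> ball x r" and "?Q p"
      then obtain e' where e': "e' > 0" "\<forall>y\<in>ball p e'. g y = 0" by blast
      have all: "\<forall>y\<in>ball x r. g y = 0"
        using ball_lemma[OF holomorphic_n_mono[OF hol r(2)] p e'(1) e'(2)] by blast
      show "?Q q"
        apply (rule exI[of _ "r - dist x q"])
        using q all proof (intro conjI ballI)
          fix y assume "y \<in> ball q (r - dist x q)"
          then have "dist x y < r" using dist_triangle[of x y q] by (auto simp: dist_commute)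
          then show "g y = 0" using all by auto
        qed auto
    qed
    ultimately show "\<exists>T. openin (top_of_set W) T \<and> x \<in> T \<and> (\<forall>p\<in>T. \<forall>q\<in>T. ?Q p \<longrightarrow> ?Q q)"
      using r by auto
  qed
  then show ?thesis by auto
qed

lemma holomorphic_n_diff:
  assumes "holomorphic_n F S" "holomorphic_n f S"
  shows "holomorphic_n (\<lambda>z. F z - f z) S"
  unfolding holomorphic_n_def
proof
  fix z assume z: "z \<in> S"
  obtain L1 where L1: "complex_linear L1" "(F has_derivative L1) (at z)"
    using assms(1) z unfolding holomorphic_n_def by blast
  obtain L2 where L2: "complex_linear L2" "(f has_derivative L2) (at z)"
    using assms(2) z unfolding holomorphic_n_def by blast
  have "((\<lambda>z. F z - f z) has_derivative (\<lambda>x. L1 x - L2 x)) (at z)"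
    using has_derivative_diff[OF L1(2) L2(2)] .
  moreover have "complex_linear (\<lambda>x. L1 x - L2 x)"
    using L1(1) L2(1) unfolding complex_linear_def
    by (auto intro: linear_compose_sub simp: algebra_simps)
  ultimately show "\<exists>L. complex_linear L \<and> ((\<lambda>z. F z - f z) has_derivative L) (at z)" by blast
qed

theorem mainTheorem2:
  fixes \<Omega> :: "(complex ^ 'n) set" and f :: "complex ^ 'n \<Rightarrow> complex"
  assumes "open \<Omega>" and "holomorphic_n f \<Omega>" and "totally_unbounded f \<Omega>"
  shows "\<forall>U V :: (complex ^ 'n) set.
           open U \<and> open V \<and> connected U \<and> V \<noteq> {} \<and> V \<subseteq> U \<inter> \<Omega> \<and> U \<inter> \<Omega> \<noteq> U \<longrightarrow>
           \<not> (\<exists>F. holomorphic_n F U \<and> (\<forall>z\<in>V. F z = f z))"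
proof (intro allI impI notI)
  fix U V :: "(complex ^ 'n) set"
  assume H: "open U \<and> open V \<and> connected U \<and> V \<noteq> {} \<and> V \<subseteq> U \<inter> \<Omega> \<and> U \<inter> \<Omega> \<noteq> U"
  assume "\<exists>F. holomorphic_n F U \<and> (\<forall>z\<in>V. F z = f z)"
  then obtain F where hF: "holomorphic_n F U" and FV: "\<forall>z\<in>V. F z = f z" by blast
  from H obtain v where v: "v \<in> V" by blast
  define W where "W = connected_component_set (U \<inter> \<Omega>) v"
  have oUO: "open (U \<inter> \<Omega>)" using H assms(1) by blast
  have oW: "open W" unfolding W_def using oUO open_connected_component by blast
  have cW: "connected W" unfolding W_def by simp
  have WUO: "W \<subseteq> U \<inter> \<Omega>" unfolding W_def using connected_component_subset by blast
  have vW: "v \<in> W" unfolding W_def using v H by auto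
  have holg: "holomorphic_n (\<lambda>z. F z - f z) W"
    using holomorphic_n_diff[OF holomorphic_n_mono[OF hF] holomorphic_n_mono[OF assms(2)]] WUO
    by blast
  obtain e where e: "e > 0" "ball v e \<subseteq> V \<inter> W"
    using open_contains_ball[of "V \<inter> W"] H oW v vW by blast
  have FW: "F z = f z" if "z \<in> W" for z
    using ident[OF holg oW cW vW e(1) _ that] e(2) FV by auto
  have "\<exists>w\<in>U. w \<in> closure W \<and> w \<notin> W"
  proof (rule ccontr)
    assume "\<not> ?thesis"
    then have "W = U \<inter> closure W" using WUO closure_subset by blast
    then have "closedin (top_of_set U) W" using closedin_closed by blast
    moreover have "openin (top_of_set U) W" using oW WUO by (simp add: open_subset)
    ultimately have "W = {} \<or> W = U" using H connected_clopen by blast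
    then show False using vW WUO H by blast
  qed
  then obtain w where wU: "w \<in> U" and wcl: "w \<in> closure W" and wW: "w \<notin> W" by blast
  have wO: "w \<notin> \<Omega>"
  proof
    assume "w \<in> \<Omega>"
    then obtain r where r: "r > 0" "ball w r \<subseteq> U \<inter> \<Omega>"
      using oUO wU open_contains_ball by blast
    obtain p where p: "p \<in> W" "dist p w < r" using wcl r(1) closure_approachable by blast
    have "connected (W \<union> ball w r)"
      using cW connected_ball p by (intro connected_Un) (auto simp: dist_commute)
    then have "W \<union> ball w r \<subseteq> W"
      unfolding W_def using connected_component_maximal[of v "W \<union> ball w r" "U \<inter> \<Omega>"]
        vW r WUO W_def by auto
    then show False using wW r centre_in_ball[of w r] by blast
  qed
  have wfr: "w \<in> frontier \<Omega>"
  proof -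
    have "w \<in> closure \<Omega>" using wcl closure_mono[of W \<Omega>] WUO by blast
    moreover have "w \<notin> interior \<Omega>" using wO interior_subset by blast
    ultimately show ?thesis by (simp add: frontier_def)
  qed
  obtain L where "(F has_derivative L) (at w)" using hF wU unfolding holomorphic_n_def by blast
  then have "isCont F w" using has_derivative_continuous by blast
  then obtain d1 where d1: "d1 > 0" "\<forall>y. dist y w < d1 \<longrightarrow> dist (F y) (F w) < 1"
    unfolding continuous_at_eps_delta by (meson zero_less_one)
  obtain d2 where d2: "d2 > 0" "ball w d2 \<subseteq> U" using H wU open_contains_ball by blast
  define \<delta> where "\<delta> = min d1 d2"
  have \<delta>: "\<delta> > 0" using d1 d2 unfolding \<delta>_def by simp
  obtain p where p: "p \<in> W" "dist p w < \<delta>" using wcl \<delta> closure_approachable by blast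
  define E where "E = connected_component_set (ball w \<delta> \<inter> \<Omega>) p"
  have pB: "p \<in> ball w \<delta> \<inter> \<Omega>" using p WUO by (auto simp: dist_commute)
  have Ecomp: "E \<in> components (ball w \<delta> \<inter> \<Omega>)"
    unfolding E_def using pB by (simp add: componentsI)
  have Esub: "E \<subseteq> ball w \<delta> \<inter> \<Omega>" unfolding E_def using connected_component_subset by blast
  have "ball w \<delta> \<subseteq> U" using d2 unfolding \<delta>_def by auto
  then have "E \<subseteq> U \<inter> \<Omega>" using Esub by blast
  moreover have "p \<in> E" unfolding E_def using pB by simp
  ultimately have EW: "E \<subseteq> W"
    unfolding W_def using connected_component_maximal[of p E "U \<inter> \<Omega>"]
      connected_component_eq[of p "U \<inter> \<Omega>" v] p(1) W_def E_def
    by (metis connected_connected_component)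
  have "f ` E \<subseteq> ball (F w) 1"
  proof
    fix y assume "y \<in> f ` E"
    then obtain x where x: "x \<in> E" "y = f x" by blast
    have "y = F x" using FW EW x by auto
    moreover have "dist x w < d1" using Esub x unfolding \<delta>_def by (auto simp: dist_commute)
    ultimately show "y \<in> ball (F w) 1" using d1 by (auto simp: dist_commute)
  qed
  then have "bounded (f ` E)" using bounded_ball bounded_subset by blast
  then show False using assms(3) wfr \<delta> Ecomp unfolding totally_unbounded_def by blast
qed

end
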